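(* Let $f:\mathbb{R}^n\to\mathbb{R}$ be convex and continuously differentiable, with $|f(x)-f(y)|\le L_0\|x-y\|$ and $\|\nabla f(x)-\nabla f(y)\|\le L_1\|x-y\|$ for all $x,y$, and let $x^*$ be a minimizer of $f$ with $f^*=f(x^* )$. Let $\tilde f(x;\xi)=f(x)[1+\nu(x;\xi)]$, where $\nu$ is i.i.d. (across all evaluations) with $\mathbb{E}[\nu]=0$, variance $\sigma_r^2>0$, $\mathbb{E}[\frac{1}{1+\nu}]\le b$, and support in $[-a,a]$ for some $a<1$. Given $x_k$ with $f(x_k)\neq0$, draw a standard Gaussian $u_k\in\mathbb{R}^n$ independent of the noise, set $\mu_k=\tilde\mu=C_4\sqrt{|\tilde f(x_k;\xi_{k'})|}$ with $C_4=\left[\frac{16\sigma_r^2 n}{L_1^2(1+3\sigma_r^2)(n+6)^3}\right]^{1/4}$, and $$s_{\tilde\mu}=\frac{\tilde f(x_k+\mu_k u_k;\xi_k)-\tilde f(x_k;\xi_{k-1})}{\mu_k}u_k,$$ where the noise in the three evaluations (indexed by $\xi_{k'},\xi_k,\xi_{k-1}$) is independent. Then $$\mathbb{E}[\langle s_{\tilde\mu},x_k-x^*\rangle]\ge f(x_k)-f^*-\frac{C_4^2L_1 n}{2}|f(x_k)|,$$ where the expectation is over $u_k,\xi_k,\xi_{k-1},\xi_{k'}$.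
   Context: $\langle\cdot,\cdot\rangle$ is the Euclidean inner product; "standard Gaussian" means mean $0$ and covariance $I_n$. *)

theory Defs
  imports "HOL-Probability.Probability"
begin

definition std_gaussian :: "'a::euclidean_space measure" where
  "std_gaussian = density lborel
     (\<lambda>x. ennreal ((2 * pi) powr (- real DIM('a) / 2) * exp (- (norm x)\<^sup>2 / 2)))"

end

theory Submission
  imports Defs
begin


definition gd :: "'a::euclidean_space \<Rightarrow> real" where
  "gd x = (2 * pi) powr (- real DIM('a) / 2) * exp (- (norm x)\<^sup>2 / 2)"

lemma gd_measurable[measurable]: "gd \<in> borel_measurable borel"
  unfolding gd_def by measurable

lemma gd_nonneg: "0 \<le> gd x" unfolding gd_def by simp

lemma std_gaussian_gd: "std_gaussian = density lborel (\<lambda>x. ennreal (gd x))"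
  unfolding std_gaussian_def gd_def by simp

lemma gd_prod: "gd (x::'a::euclidean_space) = (\<Prod>b\<in>Basis. std_normal_density (x \<bullet> b))"
proof -
  have n: "(norm x)\<^sup>2 = (\<Sum>b\<in>Basis. (x \<bullet> b)\<^sup>2)"
    by (subst power2_norm_eq_inner, subst euclidean_inner, simp add: power2_eq_square)
  have c: "(2 * pi) powr (- real DIM('a) / 2) = (\<Prod>b\<in>(Basis::'a set). 1 / sqrt (2 * pi))"
  proof -
    have "(2 * pi) powr (- real DIM('a) / 2) = ((2*pi) powr (-1/2)) ^ DIM('a)"
      by (simp add: powr_realpow[symmetric] powr_powr)
    also have "(2*pi) powr (-1/2) = 1 / sqrt (2*pi)"
      by (simp add: powr_minus_divide powr_half_sqrt)
    finally show ?thesis by simp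
  qed
  have e: "exp (- (norm x)\<^sup>2 / 2) = (\<Prod>b\<in>(Basis::'a set). exp (- (x \<bullet> b)\<^sup>2 / 2))"
    unfolding n by (simp add: exp_sum[symmetric] sum_negf sum_divide_distrib)
  show ?thesis unfolding gd_def c e std_normal_density_def prod.distrib[symmetric] ..
qed



lemma nn_std_normal_1: "(\<integral>\<^sup>+y. ennreal (std_normal_density y) \<partial>lborel) = 1"
  by (subst nn_integral_eq_integral) (auto simp: normal_density_nonneg)

lemma nn_std_normal_2: "(\<integral>\<^sup>+y. ennreal (std_normal_density y * y\<^sup>2) \<partial>lborel) = 1"
proof -
  have "integrable lborel (\<lambda>x. std_normal_density x * x^2)"
    by (rule integrable_std_normal_moment)
  moreover have "integral\<^sup>L lborel (\<lambda>x. std_normal_density x * x^2) = 1"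
    using integral_std_normal_moment_even[of 1] by (simp add: fact_numeral)
  ultimately show ?thesis
    by (subst nn_integral_eq_integral) (auto simp: normal_density_nonneg)
qed

lemma nn_gd_prod:
  assumes [measurable]: "\<And>b. b \<in> Basis \<Longrightarrow> F b \<in> borel_measurable borel"
  shows "(\<integral>\<^sup>+x. ennreal (gd (x::'a::euclidean_space)) * (\<Prod>b\<in>Basis. F b (x \<bullet> b)) \<partial>lborel)
      = (\<Prod>b\<in>Basis. \<integral>\<^sup>+y. ennreal (std_normal_density y) * F b y \<partial>lborel)"
proof -
  have "(\<integral>\<^sup>+x. ennreal (gd (x::'a::euclidean_space)) * (\<Prod>b\<in>Basis. F b (x \<bullet> b)) \<partial>lborel)
      = (\<integral>\<^sup>+x. (\<Prod>b\<in>Basis. ennreal (std_normal_density (x \<bullet> b)) * F b (x \<bullet> b)) \<partial>lborel)"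
    by (simp add: gd_prod prod.distrib prod_ennreal normal_density_nonneg)
  also have "\<dots> = (\<Prod>b\<in>Basis. \<integral>\<^sup>+y. ennreal (std_normal_density y) * F b y \<partial>lborel)"
    by (rule nn_integral_lborel_prod) auto
  finally show ?thesis .
qed

lemma prob_space_std_gaussian: "prob_space (std_gaussian :: 'a::euclidean_space measure)"
proof
  have "emeasure (std_gaussian :: 'a measure) (space std_gaussian)
     = (\<integral>\<^sup>+x. ennreal (gd (x::'a)) * (\<Prod>b\<in>Basis. (\<lambda>_. 1) (x \<bullet> b)) \<partial>lborel)"
    by (simp add: std_gaussian_gd emeasure_density)
  also have "\<dots> = 1"
    by (subst nn_gd_prod) (auto simp: nn_std_normal_1)
  finally show "emeasure (std_gaussian :: 'a measure) (space std_gaussian) = 1" .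
qed

lemma sets_std_gaussian[measurable_cong, simp]: "sets std_gaussian = sets borel"
  by (simp add: std_gaussian_def)

lemma space_std_gaussian[simp]: "space std_gaussian = UNIV"
  by (simp add: std_gaussian_def)

lemma nn_gauss_comp2:
  fixes b :: "'a::euclidean_space"
  assumes b: "b \<in> Basis"
  shows "(\<integral>\<^sup>+x. ennreal ((x \<bullet> b)\<^sup>2) \<partial>(std_gaussian::'a measure)) = 1"
proof -
  have "(\<integral>\<^sup>+x. ennreal ((x \<bullet> b)\<^sup>2) \<partial>(std_gaussian::'a measure))
      = (\<integral>\<^sup>+x. ennreal (gd (x::'a)) * (\<Prod>b'\<in>Basis. (\<lambda>b' y. if b' = b then ennreal (y\<^sup>2) else 1) b' (x \<bullet> b')) \<partial>lborel)"
    using b by (simp add: std_gaussian_gd nn_integral_density)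
  also have "\<dots> = (\<Prod>b'\<in>Basis. \<integral>\<^sup>+y. ennreal (std_normal_density y) * (if b' = b then ennreal (y\<^sup>2) else 1) \<partial>lborel)"
    by (subst nn_gd_prod) auto
  also have "\<dots> = (\<Prod>b'\<in>(Basis::'a set). (1::ennreal))"
  proof (rule prod.cong[OF refl])
    fix b' show "(\<integral>\<^sup>+y. ennreal (std_normal_density y) * (if b' = b then ennreal (y\<^sup>2) else 1) \<partial>lborel) = 1"
      by (cases "b' = b") (simp_all add: nn_std_normal_1 nn_std_normal_2 ennreal_mult[symmetric])
  qed
  finally show ?thesis by simp
qed

lemma nn_gauss_norm2: "(\<integral>\<^sup>+x. ennreal ((norm x)\<^sup>2) \<partial>(std_gaussian::'a::euclidean_space measure)) = real DIM('a)"
proof -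
  have "(\<integral>\<^sup>+x. ennreal ((norm x)\<^sup>2) \<partial>(std_gaussian::'a measure))
     = (\<integral>\<^sup>+x. (\<Sum>b\<in>Basis. ennreal ((x \<bullet> b)\<^sup>2)) \<partial>(std_gaussian::'a measure))"
  proof (intro nn_integral_cong)
    fix x :: 'a
    have "(norm x)\<^sup>2 = (\<Sum>b\<in>Basis. (x \<bullet> b)\<^sup>2)"
      by (subst power2_norm_eq_inner, subst euclidean_inner, simp add: power2_eq_square)
    then show "ennreal ((norm x)\<^sup>2) = (\<Sum>b\<in>Basis. ennreal ((x \<bullet> b)\<^sup>2))"
      by simp
  qed
  also have "\<dots> = (\<Sum>b\<in>Basis. \<integral>\<^sup>+x. ennreal ((x \<bullet> b)\<^sup>2) \<partial>(std_gaussian::'a measure))"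
    by (rule nn_integral_sum) auto
  also have "\<dots> = (\<Sum>b\<in>(Basis::'a set). 1)"
    by (intro sum.cong refl nn_gauss_comp2)
  finally show ?thesis by (simp add: ennreal_of_nat_eq_real_of_nat)
qed



interpretation gauss: prob_space "std_gaussian :: 'a::euclidean_space measure"
  by (rule prob_space_std_gaussian)

lemma gd_shift: "gd (w - v) = gd (w::'a::euclidean_space) * exp (w \<bullet> v - (norm v)\<^sup>2 / 2)"
proof -
  have "(norm (w - v))\<^sup>2 = (norm w)\<^sup>2 - 2 * (w \<bullet> v) + (norm v)\<^sup>2"
    by (simp add: power2_norm_eq_inner inner_diff_left inner_diff_right inner_commute)
  then have "- (norm (w - v))\<^sup>2 / 2 = - (norm w)\<^sup>2 / 2 + (w \<bullet> v - (norm v)\<^sup>2 / 2)"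
    by (simp add: field_simps)
  then have "exp (- (norm (w - v))\<^sup>2 / 2) = exp (- (norm w)\<^sup>2 / 2) * exp (w \<bullet> v - (norm v)\<^sup>2 / 2)"
    by (simp add: exp_add[symmetric])
  then show ?thesis unfolding gd_def by simp
qed

lemma nn_gauss_shift:
  fixes v :: "'a::euclidean_space"
  assumes [measurable]: "F \<in> borel_measurable borel"
  shows "(\<integral>\<^sup>+u. F (u + v) \<partial>std_gaussian) =
         (\<integral>\<^sup>+u. ennreal (exp (u \<bullet> v - (norm v)\<^sup>2 / 2)) * F u \<partial>std_gaussian)"
proof -
  define G where "G w = ennreal (gd (w - v)) * F w" for w
  have [measurable]: "G \<in> borel_measurable borel" unfolding G_def by measurable
  have "(\<integral>\<^sup>+u. F (u + v) \<partial>std_gaussian) = (\<integral>\<^sup>+u. G (v + u) \<partial>lborel)"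
    by (simp add: std_gaussian_gd nn_integral_density G_def add.commute)
  also have "\<dots> = (\<integral>\<^sup>+u. G u \<partial>distr lborel borel ((+) v))"
    by (subst nn_integral_distr) auto
  also have "\<dots> = (\<integral>\<^sup>+u. G u \<partial>lborel)"
    by (simp add: lborel_distr_plus)
  also have "\<dots> = (\<integral>\<^sup>+u. ennreal (exp (u \<bullet> v - (norm v)\<^sup>2 / 2)) * F u \<partial>std_gaussian)"
    by (simp add: std_gaussian_gd nn_integral_density G_def gd_shift ennreal_mult gd_nonneg mult.assoc)
  finally show ?thesis .
qed

lemma gauss_shift_measure:
  fixes v :: "'a::euclidean_space"
  shows "distr std_gaussian borel (\<lambda>u. u + v) =
         density std_gaussian (\<lambda>u. ennreal (exp (u \<bullet> v - (norm v)\<^sup>2 / 2)))"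
proof (rule measure_eqI)
  fix A assume A: "A \<in> sets (distr std_gaussian borel (\<lambda>u. u + v))"
  then have [measurable]: "A \<in> sets borel" by simp
  have "emeasure (distr std_gaussian borel (\<lambda>u. u + v)) A = (\<integral>\<^sup>+u. indicator A u \<partial>distr std_gaussian borel (\<lambda>u. u + v))"
    by (rule nn_integral_indicator[symmetric]) simp
  also have "\<dots> = (\<integral>\<^sup>+u. indicator A (u + v) \<partial>std_gaussian)"
    by (subst nn_integral_distr) auto
  also have "\<dots> = (\<integral>\<^sup>+u. ennreal (exp (u \<bullet> v - (norm v)\<^sup>2 / 2)) * indicator A u \<partial>std_gaussian)"
    by (rule nn_gauss_shift) measurable
  also have "\<dots> = emeasure (density std_gaussian (\<lambda>u. ennreal (exp (u \<bullet> v - (norm v)\<^sup>2 / 2)))) A"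
    by (subst emeasure_density) (auto simp: mult.commute)
  finally show "emeasure (distr std_gaussian borel (\<lambda>u. u + v)) A = emeasure (density std_gaussian (\<lambda>u. ennreal (exp (u \<bullet> v - (norm v)\<^sup>2 / 2)))) A" .
qed simp

lemma gauss_shift_integrable:
  fixes v :: "'a::euclidean_space" and G :: "'a \<Rightarrow> real"
  assumes [measurable]: "G \<in> borel_measurable borel"
  shows "integrable std_gaussian (\<lambda>u. G (u + v)) \<longleftrightarrow>
         integrable std_gaussian (\<lambda>u. exp (u \<bullet> v - (norm v)\<^sup>2 / 2) * G u)"
proof -
  have "integrable std_gaussian (\<lambda>u. G (u + v)) \<longleftrightarrow> integrable (distr std_gaussian borel (\<lambda>u. u + v)) G"
    by (subst integrable_distr_eq) auto
  also have "\<dots> \<longleftrightarrow> integrable std_gaussian (\<lambda>u. exp (u \<bullet> v - (norm v)\<^sup>2 / 2) * G u)"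
    unfolding gauss_shift_measure by (subst integrable_density) auto
  finally show ?thesis .
qed

lemma gauss_shift_integral:
  fixes v :: "'a::euclidean_space" and G :: "'a \<Rightarrow> real"
  assumes [measurable]: "G \<in> borel_measurable borel"
  shows "(\<integral>u. G (u + v) \<partial>std_gaussian) = (\<integral>u. exp (u \<bullet> v - (norm v)\<^sup>2 / 2) * G u \<partial>std_gaussian)"
proof -
  have "(\<integral>u. G (u + v) \<partial>std_gaussian) = (\<integral>u. G u \<partial>distr std_gaussian borel (\<lambda>u. u + v))"
    by (subst integral_distr) auto
  also have "\<dots> = (\<integral>u. exp (u \<bullet> v - (norm v)\<^sup>2 / 2) * G u \<partial>std_gaussian)"
    unfolding gauss_shift_measure by (subst integral_density) auto
  finally show ?thesis .
qed

lemma gauss_uminus: "distr std_gaussian borel uminus = (std_gaussian :: 'a::euclidean_space measure)"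
proof -
  have l: "distr lborel borel uminus = (lborel :: 'a measure)"
    using lborel_affine[of "-1" "0::'a"] by (simp add: density_1)
  show ?thesis
  proof (rule measure_eqI)
    fix A assume "A \<in> sets (distr std_gaussian borel uminus :: 'a measure)"
    then have [measurable]: "A \<in> sets borel" by simp
    have "emeasure (distr std_gaussian borel uminus) A = (\<integral>\<^sup>+u. indicator A u \<partial>distr std_gaussian borel uminus)"
      by (rule nn_integral_indicator[symmetric]) simp
    also have "\<dots> = (\<integral>\<^sup>+u. indicator A (- u) \<partial>(std_gaussian::'a measure))"
      by (subst nn_integral_distr) auto
    also have "\<dots> = (\<integral>\<^sup>+u. ennreal (gd u) * indicator A (- u) \<partial>(lborel::'a measure))"
      by (simp add: std_gaussian_gd nn_integral_density)
    also have "\<dots> = (\<integral>\<^sup>+u. (\<lambda>w. ennreal (gd w) * indicator A w) (- u) \<partial>(lborel::'a measure))"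
      by (simp add: gd_def)
    also have "\<dots> = (\<integral>\<^sup>+u. (\<lambda>w. ennreal (gd w) * indicator A w) u \<partial>distr lborel borel uminus)"
      by (subst nn_integral_distr) auto
    also have "\<dots> = emeasure std_gaussian A"
      unfolding l by (simp add: std_gaussian_gd emeasure_density mult.commute)
    finally show "emeasure (distr std_gaussian borel uminus) A = emeasure std_gaussian A" .
  qed simp
qed

lemma gauss_inner_zero: "(\<integral>u. w \<bullet> u \<partial>(std_gaussian :: 'a::euclidean_space measure)) = 0"
proof -
  have "(\<integral>u. w \<bullet> u \<partial>(std_gaussian :: 'a measure)) = (\<integral>u. w \<bullet> u \<partial>distr std_gaussian borel uminus)"
    by (simp add: gauss_uminus)
  also have "\<dots> = (\<integral>u. w \<bullet> (- u) \<partial>(std_gaussian :: 'a measure))"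
    by (subst integral_distr) auto
  also have "\<dots> = - (\<integral>u. w \<bullet> u \<partial>(std_gaussian :: 'a measure))"
    by simp
  finally show ?thesis by simp
qed

lemma gauss_integrable_norm2: "integrable std_gaussian (\<lambda>u::'a::euclidean_space. (norm u)\<^sup>2)"
  by (rule integrableI_nn_integral_finite[OF _ _ nn_gauss_norm2]) auto

lemma gauss_integral_norm2: "(\<integral>u. (norm u)\<^sup>2 \<partial>(std_gaussian::'a::euclidean_space measure)) = real DIM('a)"
  by (subst integral_eq_nn_integral) (auto simp: nn_gauss_norm2)

lemma gauss_integrable_poly:
  fixes F :: "'a::euclidean_space \<Rightarrow> real"
  assumes [measurable]: "F \<in> borel_measurable borel"
    and b: "\<And>u. \<bar>F u\<bar> \<le> C * (1 + (norm u)\<^sup>2)"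
  shows "integrable std_gaussian F"
proof -
  have i: "integrable std_gaussian (\<lambda>u::'a. C * (1 + (norm u)\<^sup>2))"
    using gauss_integrable_norm2 by auto
  have "AE u in std_gaussian. norm (F u) \<le> norm (C * (1 + (norm (u::'a))\<^sup>2))"
    using b by (auto intro: order.trans[OF _ abs_ge_self])
  from Bochner_Integration.integrable_bound[OF i _ this] show ?thesis by simp
qed



lemma norm_le_poly: "norm (u::'a::real_normed_vector) \<le> 1 + (norm u)\<^sup>2"
proof -
  have "0 \<le> (norm u - 1/2)\<^sup>2" by simp
  then show ?thesis by (simp add: power2_eq_square algebra_simps)
qed

lemma lin_poly_bound:
  fixes u :: "'a::real_normed_vector"
  assumes "\<bar>F\<bar> \<le> A + B * norm u" "0 \<le> B"
  shows "\<bar>F\<bar> \<le> (\<bar>A\<bar> + B) * (1 + (norm u)\<^sup>2)"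
proof -
  have a: "A \<le> \<bar>A\<bar> * (1 + (norm u)\<^sup>2)"
  proof -
    have "\<bar>A\<bar> * 1 \<le> \<bar>A\<bar> * (1 + (norm u)\<^sup>2)" by (intro mult_left_mono) auto
    then show ?thesis by simp
  qed
  have "B * norm u \<le> B * (1 + (norm u)\<^sup>2)"
    using norm_le_poly[of u] assms(2) by (rule mult_left_mono)
  with a have "A + B * norm u \<le> \<bar>A\<bar> * (1 + (norm u)\<^sup>2) + B * (1 + (norm u)\<^sup>2)"
    by linarith
  then show ?thesis using assms by (simp add: algebra_simps)
qed

lemma lin_lin_poly_bound:
  fixes u :: "'a::real_normed_vector"
  assumes F1: "\<bar>F1\<bar> \<le> a1 + b1 * norm u" and F2: "\<bar>F2\<bar> \<le> a2 + b2 * norm u"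
    and a1: "0 \<le> a1" and b1: "0 \<le> b1" and a2: "0 \<le> a2" and b2: "0 \<le> b2"
  shows "\<bar>F1 * F2\<bar> \<le> ((a1 + b1) * (a2 + b2)) * (1 + (norm u)\<^sup>2)"
proof -
  define m where "m = max 1 (norm u)"
  have m1: "1 \<le> m" "norm u \<le> m" unfolding m_def by auto
  have "a1 + b1 * norm u \<le> a1 * m + b1 * m"
    using mult_left_mono[OF m1(2) b1] mult_left_mono[OF m1(1) a1] by simp
  then have e1: "\<bar>F1\<bar> \<le> (a1 + b1) * m" using F1 by (simp add: distrib_right)
  have "a2 + b2 * norm u \<le> a2 * m + b2 * m"
    using mult_left_mono[OF m1(2) b2] mult_left_mono[OF m1(1) a2] by simp
  then have e2: "\<bar>F2\<bar> \<le> (a2 + b2) * m" using F2 by (simp add: distrib_right)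
  have "\<bar>F1\<bar> * \<bar>F2\<bar> \<le> ((a1 + b1) * m) * ((a2 + b2) * m)"
    using e1 e2 by (intro mult_mono) auto
  also have "\<dots> = ((a1 + b1) * (a2 + b2)) * (m * m)" by (simp add: ac_simps)
  also have "m * m \<le> 1 + (norm u)\<^sup>2"
    unfolding m_def by (auto simp: max_def power2_eq_square)
  then have "((a1 + b1) * (a2 + b2)) * (m * m) \<le> ((a1 + b1) * (a2 + b2)) * (1 + (norm u)\<^sup>2)"
    using a1 b1 a2 b2 by (intro mult_left_mono) auto
  finally show ?thesis by (simp add: abs_mult)
qed

lemma gauss_integrable_exp_poly:
  fixes F :: "'a::euclidean_space \<Rightarrow> real"
  assumes [measurable]: "F \<in> borel_measurable borel"
    and b: "\<And>u. \<bar>F u\<bar> \<le> C * (1 + (norm u)\<^sup>2)"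
  shows "integrable std_gaussian (\<lambda>u. exp (u \<bullet> v) * F u)"
proof -
  have "\<bar>F 0\<bar> \<le> C" using b[of 0] by simp
  then have C: "0 \<le> C" by (meson abs_ge_zero order.trans)
  have "integrable std_gaussian (\<lambda>u. F (u + v))"
  proof (rule gauss_integrable_poly[where C="C * (2 * (1 + (norm v)\<^sup>2))"])
    fix u :: 'a
    have "(norm (u + v))\<^sup>2 \<le> (norm u + norm v)\<^sup>2"
      by (simp add: norm_triangle_ineq power_mono)
    also have "\<dots> \<le> 2 * (norm u)\<^sup>2 + 2 * (norm v)\<^sup>2"
      using sum_squares_ge_zero[of "norm u - norm v" 0] by (simp add: power2_eq_square algebra_simps)
    finally have h: "(norm (u + v))\<^sup>2 \<le> 2 * (norm u)\<^sup>2 + 2 * (norm v)\<^sup>2" .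
    have eq: "2 * (1 + (norm v)\<^sup>2) * (1 + (norm u)\<^sup>2) = 2 + 2 * (norm v)\<^sup>2 + 2 * (norm u)\<^sup>2 + 2 * ((norm v)\<^sup>2 * (norm u)\<^sup>2)"
      by (simp add: algebra_simps)
    have "0 \<le> (norm v)\<^sup>2 * (norm u)\<^sup>2" by simp
    then have "1 + (norm (u + v))\<^sup>2 \<le> 2 * (1 + (norm v)\<^sup>2) * (1 + (norm u)\<^sup>2)"
      using h eq by linarith
    then have "C * (1 + (norm (u + v))\<^sup>2) \<le> C * (2 * (1 + (norm v)\<^sup>2) * (1 + (norm u)\<^sup>2))"
      using C by (rule mult_left_mono)
    then show "\<bar>F (u + v)\<bar> \<le> C * (2 * (1 + (norm v)\<^sup>2)) * (1 + (norm u)\<^sup>2)"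
      using b[of "u + v"] by (simp add: mult.assoc)
  qed measurable
  then have "integrable std_gaussian (\<lambda>u. exp (u \<bullet> v - (norm v)\<^sup>2 / 2) * F u)"
    by (simp add: gauss_shift_integrable)
  then have "integrable std_gaussian (\<lambda>u. exp ((norm v)\<^sup>2 / 2) * (exp (u \<bullet> v - (norm v)\<^sup>2 / 2) * F u))"
    by (rule integrable_mult_right)
  moreover have "(\<lambda>u. exp ((norm v)\<^sup>2 / 2) * (exp (u \<bullet> v - (norm v)\<^sup>2 / 2) * F u)) = (\<lambda>u. exp (u \<bullet> v) * F u)"
    by (auto simp: mult.assoc[symmetric] exp_add[symmetric])
  ultimately show ?thesis by simp
qed

lemma gauss_integrable_exp_abs_poly:
  fixes F :: "'a::euclidean_space \<Rightarrow> real"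
  assumes [measurable]: "F \<in> borel_measurable borel"
    and b: "\<And>u. \<bar>F u\<bar> \<le> C * (1 + (norm u)\<^sup>2)"
  shows "integrable std_gaussian (\<lambda>u. exp \<bar>u \<bullet> v\<bar> * F u)"
proof -
  have b': "\<And>u. \<bar>\<bar>F u\<bar>\<bar> \<le> C * (1 + (norm u)\<^sup>2)" using b by simp
  have i1: "integrable std_gaussian (\<lambda>u. exp (u \<bullet> v) * \<bar>F u\<bar>)"
    by (rule gauss_integrable_exp_poly[OF _ b']) measurable
  have i2: "integrable std_gaussian (\<lambda>u. exp (u \<bullet> (- v)) * \<bar>F u\<bar>)"
    by (rule gauss_integrable_exp_poly[OF _ b']) measurable
  have i: "integrable std_gaussian (\<lambda>u. exp (u \<bullet> v) * \<bar>F u\<bar> + exp (u \<bullet> (- v)) * \<bar>F u\<bar>)"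
    using i1 i2 by (rule Bochner_Integration.integrable_add)
  have "AE u in std_gaussian. norm (exp \<bar>u \<bullet> v\<bar> * F u) \<le> norm (exp (u \<bullet> v) * \<bar>F u\<bar> + exp (u \<bullet> (- v)) * \<bar>F u\<bar>)"
  proof (rule AE_I2)
    fix u :: 'a
    have "exp \<bar>u \<bullet> v\<bar> \<le> exp (u \<bullet> v) + exp (u \<bullet> (- v))"
      by (cases "0 \<le> u \<bullet> v") (auto simp: add_increasing add_increasing2 abs_if)
    then show "norm (exp \<bar>u \<bullet> v\<bar> * F u) \<le> norm (exp (u \<bullet> v) * \<bar>F u\<bar> + exp (u \<bullet> (- v)) * \<bar>F u\<bar>)"
      by (simp add: abs_mult distrib_right[symmetric] mult_right_mono)
  qed
  from Bochner_Integration.integrable_bound[OF i _ this] show ?thesis by simp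
qed



lemma exp_sub1_bound: fixes y :: real shows "\<bar>exp y - 1\<bar> \<le> \<bar>y\<bar> * exp \<bar>y\<bar>"
proof (cases "0 \<le> y")
  case True
  have "1 - y \<le> exp (- y)" using exp_ge_add_one_self[of "- y"] by simp
  then have "(1 - y) * exp y \<le> exp (- y) * exp y" by (intro mult_right_mono) auto
  then have "(1 - y) * exp y \<le> 1" by (simp add: exp_minus field_simps)
  then have "exp y - 1 \<le> y * exp y" by (simp add: algebra_simps)
  moreover have "1 \<le> exp y" using True by simp
  ultimately show ?thesis using True by simp
next
  case False
  have a: "1 + y \<le> exp y" using exp_ge_add_one_self[of y] by simp
  have b: "exp y \<le> 1" using False by simp
  have c: "(- y) * 1 \<le> (- y) * exp (- y)" using False by (intro mult_left_mono) auto
  have "\<bar>exp y - 1\<bar> = 1 - exp y" using b by simp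
  also have "\<dots> \<le> - y" using a by linarith
  also have "\<dots> \<le> (- y) * exp (- y)" using c by simp
  also have "\<dots> = \<bar>y\<bar> * exp \<bar>y\<bar>" using False by simp
  finally show ?thesis .
qed

lemma W_bound:
  fixes t z c :: real
  assumes t: "0 < t" "t \<le> 1" and c: "0 \<le> c"
  shows "\<bar>(exp (t * z - t\<^sup>2 * c) - 1) / t\<bar> \<le> (\<bar>z\<bar> + c) * exp (\<bar>z\<bar> + c)"
proof -
  define y where "y = t * z - t\<^sup>2 * c"
  have "t * t \<le> t * 1" using t by (intro mult_left_mono) auto
  then have tt: "t * t * c \<le> t * c" using c by (intro mult_right_mono) auto
  have "\<bar>y\<bar> \<le> \<bar>t * z\<bar> + \<bar>t\<^sup>2 * c\<bar>" unfolding y_def by (rule abs_triangle_ineq4)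
  also have "\<dots> = t * \<bar>z\<bar> + t * t * c" using t c by (simp add: abs_mult power2_eq_square)
  finally have y1: "\<bar>y\<bar> \<le> t * (\<bar>z\<bar> + c)" using tt by (simp add: algebra_simps)
  also have "\<dots> \<le> 1 * (\<bar>z\<bar> + c)" using t c by (intro mult_right_mono) auto
  finally have y2: "exp \<bar>y\<bar> \<le> exp (\<bar>z\<bar> + c)" by simp
  have "\<bar>exp y - 1\<bar> \<le> \<bar>y\<bar> * exp \<bar>y\<bar>" by (rule exp_sub1_bound)
  also have "\<dots> \<le> (t * (\<bar>z\<bar> + c)) * exp (\<bar>z\<bar> + c)"
    using y1 y2 by (intro mult_mono) auto
  finally have "\<bar>exp y - 1\<bar> / t \<le> (\<bar>z\<bar> + c) * exp (\<bar>z\<bar> + c)"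
    using t by (simp add: divide_le_eq algebra_simps)
  then show ?thesis using t by (simp add: y_def)
qed

lemma W_lim:
  fixes z c :: real
  shows "(\<lambda>m. (exp ((1 / real (Suc m)) * z - (1 / real (Suc m))\<^sup>2 * c) - 1) / (1 / real (Suc m))) \<longlonglongrightarrow> z"
proof -
  have d: "((\<lambda>t. exp (t * z - t\<^sup>2 * c)) has_real_derivative z) (at 0)"
    by (auto intro!: derivative_eq_intros)
  then have l: "((\<lambda>h. (exp ((0 + h) * z - (0 + h)\<^sup>2 * c) - exp (0 * z - 0\<^sup>2 * c)) / h) \<longlongrightarrow> z) (at 0)"
    by (simp add: DERIV_def)
  have s: "filterlim (\<lambda>m. 1 / real (Suc m)) (at 0) sequentially"
  proof (rule filterlim_atI)
    show "(\<lambda>m. 1 / real (Suc m)) \<longlonglongrightarrow> 0"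
      using LIMSEQ_Suc[OF lim_1_over_n] by simp
  qed simp
  from filterlim_compose[OF l s] show ?thesis by simp
qed



lemma gauss_stein_ineq:
  fixes h :: "'a::euclidean_space \<Rightarrow> real" and e :: 'a
  assumes cvx: "convex_on UNIV h"
    and lip: "\<And>u w. \<bar>h u - h w\<bar> \<le> K * norm (u - w)"
    and hm[measurable]: "h \<in> borel_measurable borel"
  shows "(\<integral>u. h u \<partial>std_gaussian) - (\<integral>u. h (u - e) \<partial>std_gaussian) \<le> (\<integral>u. h u * (u \<bullet> e) \<partial>std_gaussian)"
proof -
  obtain b :: 'a where b: "b \<in> Basis" using SOME_Basis by blast
  have "\<bar>h b - h 0\<bar> \<le> K * norm (b - 0)" by (rule lip)
  moreover have "norm (b - 0) = 1" using b by simp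
  ultimately have "\<bar>h b - h 0\<bar> \<le> K" by simp
  then have K: "0 \<le> K" by (meson abs_ge_zero order.trans)
  have hb: "\<bar>h (u + w)\<bar> \<le> (\<bar>h 0\<bar> + K * norm w) + K * norm u" for u w
  proof -
    have "\<bar>h (u + w) - h 0\<bar> \<le> K * norm (u + w)" using lip[of "u + w" 0] by simp
    also have "\<dots> \<le> K * (norm u + norm w)" using K by (intro mult_left_mono norm_triangle_ineq) auto
    finally show ?thesis by (simp add: algebra_simps)
  qed
  have hpoly: "\<bar>h (u + w)\<bar> \<le> (\<bar>\<bar>h 0\<bar> + K * norm w\<bar> + K) * (1 + (norm u)\<^sup>2)" for u w
    by (rule lin_poly_bound[OF hb K])
  have int_shift: "integrable std_gaussian (\<lambda>u. h (u + w))" for w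
    by (rule gauss_integrable_poly[OF _ hpoly]) measurable
  have int0: "integrable std_gaussian h"
    using int_shift[of 0] by simp
  have intm: "integrable std_gaussian (\<lambda>u. h (u - e))"
    using int_shift[of "- e"] by simp
  define c where "c = (norm e)\<^sup>2 / 2"
  have c0: "0 \<le> c" unfolding c_def by simp
  define W where "W t u = exp (t * (u \<bullet> e) - t\<^sup>2 * c)" for t u
  have Weq: "exp (u \<bullet> (t *\<^sub>R e) - (norm (t *\<^sub>R e))\<^sup>2 / 2) = W t u" for t u
    by (simp add: W_def c_def power_mult_distrib)
  have shift_eq: "(\<integral>u. h (u + t *\<^sub>R e) \<partial>std_gaussian) = (\<integral>u. W t u * h u \<partial>std_gaussian)" for t
    using gauss_shift_integral[OF hm, of "t *\<^sub>R e"] unfolding Weq .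
  have int_W: "integrable std_gaussian (\<lambda>u. W t u * h u)" for t
    using gauss_shift_integrable[OF hm, of "t *\<^sub>R e"] int_shift[of "t *\<^sub>R e"] unfolding Weq by simp
  define \<Psi>0 where "\<Psi>0 = (\<integral>u. h u \<partial>std_gaussian)"
  define \<Psi>m where "\<Psi>m = (\<integral>u. h (u - e) \<partial>std_gaussian)"
  have quot: "\<Psi>0 - \<Psi>m \<le> (\<integral>u. h u * ((W t u - 1) / t) \<partial>std_gaussian)" if t: "0 < t" for t
  proof -
    have pw: "(1 + t) * h u \<le> h (u + t *\<^sub>R e) + t * h (u - e)" for u
    proof -
      define s where "s = t / (1 + t)"
      have s: "0 \<le> s" "s \<le> 1" using t by (auto simp: s_def)
      have vec: "(1 - s) *\<^sub>R (u + t *\<^sub>R e) + s *\<^sub>R (u - e) = u"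
      proof -
        have "(1 - s) * t = s" using t by (simp add: s_def field_simps)
        have "(1 - s) *\<^sub>R (u + t *\<^sub>R e) + s *\<^sub>R (u - e) = u + ((1 - s) * t - s) *\<^sub>R e"
          by (simp add: algebra_simps)
        also have "\<dots> = u" using \<open>(1 - s) * t = s\<close> by simp
        finally show ?thesis .
      qed
      have "h u \<le> (1 - s) * h (u + t *\<^sub>R e) + s * h (u - e)"
        using convex_onD[OF cvx s(1) s(2), of "u + t *\<^sub>R e" "u - e"] by (simp add: vec)
      then have "(1 + t) * h u \<le> (1 + t) * ((1 - s) * h (u + t *\<^sub>R e) + s * h (u - e))"
        using t by (intro mult_left_mono) auto
      also have "\<dots> = ((1 + t) * (1 - s)) * h (u + t *\<^sub>R e) + ((1 + t) * s) * h (u - e)"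
        by (simp add: algebra_simps)
      finally have "(1 + t) * h u \<le> ((1 + t) * (1 - s)) * h (u + t *\<^sub>R e) + ((1 + t) * s) * h (u - e)" .
      moreover have "(1 + t) * (1 - s) = 1" "(1 + t) * s = t"
        using t by (simp_all add: s_def field_simps)
      ultimately show ?thesis by simp
    qed
    have "(\<integral>u. (1 + t) * h u \<partial>std_gaussian) \<le> (\<integral>u. h (u + t *\<^sub>R e) + t * h (u - e) \<partial>std_gaussian)"
      by (intro integral_mono pw int_shift Bochner_Integration.integrable_add integrable_mult_right int0 intm)
    then have "(1 + t) * \<Psi>0 \<le> (\<integral>u. W t u * h u \<partial>std_gaussian) + t * \<Psi>m"
      using int_shift[of "t *\<^sub>R e"] intm by (simp add: \<Psi>0_def \<Psi>m_def shift_eq)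
    then have "\<Psi>0 - \<Psi>m \<le> ((\<integral>u. W t u * h u \<partial>std_gaussian) - \<Psi>0) / t"
      using t by (simp add: field_simps)
    also have "((\<integral>u. W t u * h u \<partial>std_gaussian) - \<Psi>0) / t = (\<integral>u. h u * ((W t u - 1) / t) \<partial>std_gaussian)"
    proof -
      have "(\<integral>u. h u * ((W t u - 1) / t) \<partial>std_gaussian) = (\<integral>u. (W t u * h u - h u) / t \<partial>std_gaussian)"
        by (intro Bochner_Integration.integral_cong) (auto simp: field_simps)
      also have "\<dots> = ((\<integral>u. W t u * h u \<partial>std_gaussian) - \<Psi>0) / t"
        using int_W[of t] int0 by (simp add: \<Psi>0_def)
      finally show ?thesis by (rule sym)
    qed
    finally show ?thesis .
  qed
  define tm where "tm m = 1 / real (Suc m)" for m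
  define D where "D u = \<bar>h u\<bar> * ((\<bar>u \<bullet> e\<bar> + c) * exp (\<bar>u \<bullet> e\<bar> + c))" for u
  have Dint: "integrable std_gaussian D"
  proof -
    define F where "F u = \<bar>h u\<bar> * (\<bar>u \<bullet> e\<bar> + c)" for u
    have Fb: "\<bar>F u\<bar> \<le> ((\<bar>h 0\<bar> + K) * (c + norm e)) * (1 + (norm u)\<^sup>2)" for u
    proof -
      have "\<bar>\<bar>h u\<bar>\<bar> \<le> \<bar>h 0\<bar> + K * norm u" using hb[of u 0] by simp
      moreover have "\<bar>\<bar>u \<bullet> e\<bar> + c\<bar> \<le> c + norm e * norm u"
        using c0 Cauchy_Schwarz_ineq2[of u e] by (simp add: mult.commute)
      ultimately show ?thesis unfolding F_def
        by (intro lin_lin_poly_bound) (auto simp: K c0)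
    qed
    have "integrable std_gaussian (\<lambda>u. exp \<bar>u \<bullet> e\<bar> * F u)"
      by (rule gauss_integrable_exp_abs_poly[OF _ Fb]) (simp add: F_def)
    then have "integrable std_gaussian (\<lambda>u. exp c * (exp \<bar>u \<bullet> e\<bar> * F u))"
      by (rule integrable_mult_right)
    moreover have "(\<lambda>u. exp c * (exp \<bar>u \<bullet> e\<bar> * F u)) = D"
      by (auto simp: D_def F_def exp_add ac_simps)
    ultimately show ?thesis by simp
  qed
  have lim: "(\<lambda>m. \<integral>u. h u * ((W (tm m) u - 1) / tm m) \<partial>std_gaussian) \<longlonglongrightarrow> (\<integral>u. h u * (u \<bullet> e) \<partial>std_gaussian)"
  proof (rule integral_dominated_convergence[where w=D])
    show "(\<lambda>u. h u * (u \<bullet> e)) \<in> borel_measurable std_gaussian" by simp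
    show "(\<lambda>u. h u * ((W (tm m) u - 1) / tm m)) \<in> borel_measurable std_gaussian" for m
      by (simp add: W_def)
    show "integrable std_gaussian D" by (rule Dint)
    show "AE u in std_gaussian. (\<lambda>m. h u * ((W (tm m) u - 1) / tm m)) \<longlonglongrightarrow> h u * (u \<bullet> e)"
    proof (rule AE_I2)
      fix u :: 'a
      show "(\<lambda>m. h u * ((W (tm m) u - 1) / tm m)) \<longlonglongrightarrow> h u * (u \<bullet> e)"
        by (intro tendsto_mult_left) (unfold W_def tm_def, rule W_lim)
    qed
    show "AE u in std_gaussian. norm (h u * ((W (tm m) u - 1) / tm m)) \<le> D u" for m
    proof (rule AE_I2)
      fix u :: 'a
      have "0 < tm m" "tm m \<le> 1" by (auto simp: tm_def)
      from W_bound[OF this c0, of "u \<bullet> e"]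
      have "\<bar>(W (tm m) u - 1) / tm m\<bar> \<le> (\<bar>u \<bullet> e\<bar> + c) * exp (\<bar>u \<bullet> e\<bar> + c)"
        by (simp add: W_def)
      then have "\<bar>h u\<bar> * \<bar>(W (tm m) u - 1) / tm m\<bar> \<le> \<bar>h u\<bar> * ((\<bar>u \<bullet> e\<bar> + c) * exp (\<bar>u \<bullet> e\<bar> + c))"
        by (rule mult_left_mono) simp
      then show "norm (h u * ((W (tm m) u - 1) / tm m)) \<le> D u"
        unfolding D_def real_norm_def abs_mult .
    qed
  qed
  have "\<Psi>0 - \<Psi>m \<le> (\<integral>u. h u * (u \<bullet> e) \<partial>std_gaussian)"
  proof (rule LIMSEQ_le_const[OF lim], intro exI allI impI)
    fix n :: nat
    have "0 < tm n" by (simp add: tm_def)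
    then show "\<Psi>0 - \<Psi>m \<le> (\<integral>u. h u * ((W (tm n) u - 1) / tm n) \<partial>std_gaussian)" by (rule quot)
  qed
  then show ?thesis by (simp add: \<Psi>0_def \<Psi>m_def)
qed



lemma line_deriv:
  fixes f :: "'a::euclidean_space \<Rightarrow> real"
  assumes grad: "\<And>x. (f has_derivative (\<lambda>h. g x \<bullet> h)) (at x)"
  shows "((\<lambda>s. f (x + s *\<^sub>R v)) has_real_derivative (g (x + s *\<^sub>R v) \<bullet> v)) (at s)"
proof -
  have l: "((\<lambda>s. x + s *\<^sub>R v) has_derivative (\<lambda>s. s *\<^sub>R v)) (at s)"
    by (auto intro!: derivative_eq_intros)
  have "((\<lambda>s. f (x + s *\<^sub>R v)) has_derivative (\<lambda>t. g (x + s *\<^sub>R v) \<bullet> (t *\<^sub>R v))) (at s)"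
    using has_derivative_compose[OF l grad] by (simp add: o_def)
  moreover have "(\<lambda>t. g (x + s *\<^sub>R v) \<bullet> (t *\<^sub>R v)) = (*) (g (x + s *\<^sub>R v) \<bullet> v)"
    by (rule ext) simp
  ultimately show ?thesis
    unfolding has_field_derivative_def by simp
qed

lemma convex_tangent:
  fixes f :: "'a::euclidean_space \<Rightarrow> real"
  assumes cvx: "convex_on UNIV f" and grad: "\<And>x. (f has_derivative (\<lambda>h. g x \<bullet> h)) (at x)"
  shows "f x + g x \<bullet> (y - x) \<le> f y"
proof -
  define v where "v = y - x"
  define \<phi> where "\<phi> s = f (x + s *\<^sub>R v)" for s :: real
  have c: "convex_on UNIV \<phi>"
  proof (rule convex_onI)
    fix t a b :: real assume t: "0 < t" "t < 1"
    have "\<phi> ((1 - t) *\<^sub>R a + t *\<^sub>R b) = f ((1 - t) *\<^sub>R (x + a *\<^sub>R v) + t *\<^sub>R (x + b *\<^sub>R v))"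
      unfolding \<phi>_def by (simp add: algebra_simps)
    also have "\<dots> \<le> (1 - t) * f (x + a *\<^sub>R v) + t * f (x + b *\<^sub>R v)"
      using t by (intro convex_onD[OF cvx]) auto
    finally show "\<phi> ((1 - t) *\<^sub>R a + t *\<^sub>R b) \<le> (1 - t) * \<phi> a + t * \<phi> b" by (simp add: \<phi>_def)
  qed simp
  have d: "(\<phi> has_field_derivative (g x \<bullet> v)) (at 0 within UNIV)"
    using line_deriv[OF grad, of x v 0] unfolding \<phi>_def[abs_def] by simp
  have "\<phi> 1 - \<phi> 0 \<ge> (g x \<bullet> v) * (1 - 0)"
    by (rule convex_on_imp_above_tangent[OF c _ _ _ d]) auto
  then show ?thesis by (simp add: \<phi>_def v_def)
qed

lemma descent_lemma:
  fixes f :: "'a::euclidean_space \<Rightarrow> real"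
  assumes grad: "\<And>x. (f has_derivative (\<lambda>h. g x \<bullet> h)) (at x)"
    and lip1: "\<And>x y. norm (g x - g y) \<le> L1 * norm (x - y)"
  shows "f y \<le> f x + g x \<bullet> (y - x) + L1 / 2 * (norm (y - x))\<^sup>2"
proof -
  define v where "v = y - x"
  define \<phi> where "\<phi> s = f (x + s *\<^sub>R v) - s * (g x \<bullet> v) - L1 / 2 * s\<^sup>2 * (norm v)\<^sup>2" for s :: real
  have dd: "\<exists>y. (\<phi> has_real_derivative y) (at s) \<and> y \<le> 0" if s: "0 \<le> s" "s \<le> 1" for s
  proof -
    have D: "(\<phi> has_real_derivative (g (x + s *\<^sub>R v) \<bullet> v - g x \<bullet> v - L1 * s * (norm v)\<^sup>2)) (at s)"
      unfolding \<phi>_def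
      by (rule derivative_eq_intros line_deriv[OF grad] | simp)+
    have "g (x + s *\<^sub>R v) \<bullet> v - g x \<bullet> v = (g (x + s *\<^sub>R v) - g x) \<bullet> v" by (simp add: inner_diff_left)
    also have "\<dots> \<le> norm (g (x + s *\<^sub>R v) - g x) * norm v" by (rule norm_cauchy_schwarz)
    also have "\<dots> \<le> (L1 * norm (s *\<^sub>R v)) * norm v"
      using lip1[of "x + s *\<^sub>R v" x] by (intro mult_right_mono) auto
    also have "\<dots> = L1 * s * (norm v)\<^sup>2" using s by (simp add: power2_eq_square)
    finally show "\<exists>y. (\<phi> has_real_derivative y) (at s) \<and> y \<le> 0"
      using D by (intro exI[of _ "g (x + s *\<^sub>R v) \<bullet> v - g x \<bullet> v - L1 * s * (norm v)\<^sup>2"]) auto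
  qed
  have "\<phi> 0 \<ge> \<phi> 1"
    by (rule DERIV_nonpos_imp_nonincreasing[of 0 1 \<phi>]) (use dd in auto)
  then show ?thesis by (simp add: \<phi>_def v_def algebra_simps)
qed



lemma gauss_int_lin:
  fixes F :: "'a::euclidean_space \<Rightarrow> real"
  assumes [measurable]: "F \<in> borel_measurable borel"
    and b: "\<And>u. \<bar>F u\<bar> \<le> A + B * norm u" and B: "0 \<le> B"
  shows "integrable std_gaussian F"
  by (rule gauss_integrable_poly[OF _ lin_poly_bound[OF b B]]) simp

lemma gauss_int_inner: "integrable std_gaussian (\<lambda>u::'a::euclidean_space. w \<bullet> u)"
  by (rule gauss_int_lin[where A=0 and B="norm w"]) (auto intro: Cauchy_Schwarz_ineq2)

lemma gauss_measure_UNIV: "measure (std_gaussian :: 'a::euclidean_space measure) UNIV = 1"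
  using prob_space.prob_space[OF prob_space_std_gaussian] by simp

lemma gauss_const_inner: "(\<integral>u. c + w \<bullet> u \<partial>(std_gaussian::'a::euclidean_space measure)) = c"
proof -
  have "(\<integral>u. c + w \<bullet> u \<partial>(std_gaussian::'a measure)) = (\<integral>u. c \<partial>(std_gaussian::'a measure)) + (\<integral>u. w \<bullet> u \<partial>(std_gaussian::'a measure))"
    by (rule Bochner_Integration.integral_add) (auto simp: gauss_int_inner)
  also have "\<dots> = c" by (simp add: gauss_inner_zero gauss_measure_UNIV)
  finally show ?thesis .
qed

lemma gauss_quad: "(\<integral>u. c + w \<bullet> u + k * (norm u)\<^sup>2 \<partial>(std_gaussian::'a::euclidean_space measure)) = c + k * real DIM('a)"
proof -
  have "(\<integral>u. c + w \<bullet> u + k * (norm u)\<^sup>2 \<partial>(std_gaussian::'a measure)) = (\<integral>u. c + w \<bullet> u \<partial>(std_gaussian::'a measure)) + (\<integral>u. k * (norm u)\<^sup>2 \<partial>(std_gaussian::'a measure))"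
    by (rule Bochner_Integration.integral_add) (auto intro!: Bochner_Integration.integrable_add gauss_int_inner integrable_mult_right gauss_integrable_norm2)
  also have "\<dots> = c + k * real DIM('a)"
    by (simp only: gauss_const_inner integral_mult_right_zero gauss_integral_norm2)
  finally show ?thesis .
qed

lemma f_continuous:
  fixes f :: "'a::euclidean_space \<Rightarrow> real"
  assumes grad: "\<And>x. (f has_derivative (\<lambda>h. g x \<bullet> h)) (at x)"
  shows "continuous_on UNIV f"
  by (intro continuous_at_imp_continuous_on ballI has_derivative_continuous[OF grad])

lemma gauss_main:
  fixes f :: "'a::euclidean_space \<Rightarrow> real"
  assumes cvx: "convex_on UNIV f"
    and grad: "\<And>x. (f has_derivative (\<lambda>h. g x \<bullet> h)) (at x)"
    and lip0: "\<And>x y. \<bar>f x - f y\<bar> \<le> L0 * norm (x - y)"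
    and lip1: "\<And>x y. norm (g x - g y) \<le> L1 * norm (x - y)"
    and mu: "0 < \<mu>"
  shows "f x - f xs - \<mu>\<^sup>2 * L1 * real DIM('a) / 2
           \<le> (\<integral>u. f (x + \<mu> *\<^sub>R u) * (u \<bullet> (x - xs)) \<partial>std_gaussian) / \<mu>"
    and "integrable std_gaussian (\<lambda>u. f (x + \<mu> *\<^sub>R u) * (u \<bullet> (x - xs)))"
proof -
  have fm[measurable]: "f \<in> borel_measurable borel"
    by (rule borel_measurable_continuous_onI[OF f_continuous[OF grad]])
  define h where "h u = f (x + \<mu> *\<^sub>R u)" for u
  have hm[measurable]: "h \<in> borel_measurable borel" unfolding h_def by measurable
  have hc: "convex_on UNIV h"
  proof (rule convex_onI)
    fix t :: real and a b :: 'a assume t: "0 < t" "t < 1"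
    have "h ((1 - t) *\<^sub>R a + t *\<^sub>R b) = f ((1 - t) *\<^sub>R (x + \<mu> *\<^sub>R a) + t *\<^sub>R (x + \<mu> *\<^sub>R b))"
      unfolding h_def by (simp add: algebra_simps)
    also have "\<dots> \<le> (1 - t) * f (x + \<mu> *\<^sub>R a) + t * f (x + \<mu> *\<^sub>R b)"
      using t by (intro convex_onD[OF cvx]) auto
    finally show "h ((1 - t) *\<^sub>R a + t *\<^sub>R b) \<le> (1 - t) * h a + t * h b" by (simp add: h_def)
  qed simp
  have hl: "\<bar>h u - h w\<bar> \<le> (L0 * \<mu>) * norm (u - w)" for u w
  proof -
    have "\<bar>h u - h w\<bar> \<le> L0 * norm ((x + \<mu> *\<^sub>R u) - (x + \<mu> *\<^sub>R w))" unfolding h_def by (rule lip0)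
    also have "(x + \<mu> *\<^sub>R u) - (x + \<mu> *\<^sub>R w) = \<mu> *\<^sub>R (u - w)" by (simp add: algebra_simps)
    finally show ?thesis using mu by (simp add: mult.assoc)
  qed
  obtain bb :: 'a where bb: "bb \<in> Basis" using SOME_Basis by blast
  have L0: "0 \<le> L0"
  proof -
    have "\<bar>f bb - f 0\<bar> \<le> L0 * norm (bb - 0)" by (rule lip0)
    then have "\<bar>f bb - f 0\<bar> \<le> L0" using bb by simp
    then show ?thesis by (meson abs_ge_zero order.trans)
  qed
  define d where "d = x - xs"
  define e where "e = (1 / \<mu>) *\<^sub>R d"
  have hb: "\<bar>h u\<bar> \<le> \<bar>h 0\<bar> + (L0 * \<mu>) * norm u" for u
    using hl[of u 0] by simp
  have int_h: "integrable std_gaussian h"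
    by (rule gauss_int_lin[OF hm hb]) (use L0 mu in simp)
  have int_hd: "integrable std_gaussian (\<lambda>u. h u * (u \<bullet> d))"
  proof (rule gauss_integrable_poly)
    fix u :: 'a
    have "\<bar>u \<bullet> d\<bar> \<le> 0 + norm d * norm u" using Cauchy_Schwarz_ineq2[of u d] by (simp add: mult.commute)
    then show "\<bar>h u * (u \<bullet> d)\<bar> \<le> ((\<bar>h 0\<bar> + L0 * \<mu>) * (0 + norm d)) * (1 + (norm u)\<^sup>2)"
      by (intro lin_lin_poly_bound[OF hb]) (use L0 mu in auto)
  qed simp
  then show "integrable std_gaussian (\<lambda>u. f (x + \<mu> *\<^sub>R u) * (u \<bullet> (x - xs)))"
    by (simp add: h_def d_def)
  have stein: "(\<integral>u. h u \<partial>std_gaussian) - (\<integral>u. h (u - e) \<partial>std_gaussian) \<le> (\<integral>u. h u * (u \<bullet> e) \<partial>std_gaussian)"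
    by (rule gauss_stein_ineq[OF hc hl hm])
  have "(\<integral>u. h u * (u \<bullet> e) \<partial>std_gaussian) = (\<integral>u. h u * (u \<bullet> d) / \<mu> \<partial>std_gaussian)"
    by (simp add: e_def)
  also have "\<dots> = (\<integral>u. h u * (u \<bullet> d) \<partial>std_gaussian) / \<mu>" by simp
  finally have s1: "(\<integral>u. h u * (u \<bullet> e) \<partial>std_gaussian) = (\<integral>u. h u * (u \<bullet> d) \<partial>std_gaussian) / \<mu>" .
  have he: "h (u - e) = f (xs + \<mu> *\<^sub>R u)" for u
  proof -
    have "x + \<mu> *\<^sub>R (u - e) = xs + \<mu> *\<^sub>R u"
      using mu by (simp add: e_def d_def algebra_simps)
    then show ?thesis by (simp add: h_def)
  qed
  have low: "f x \<le> (\<integral>u. h u \<partial>std_gaussian)"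
  proof -
    have "(\<integral>u. f x + (\<mu> *\<^sub>R g x) \<bullet> u \<partial>std_gaussian) \<le> (\<integral>u. h u \<partial>std_gaussian)"
    proof (rule integral_mono)
      show "integrable std_gaussian (\<lambda>u. f x + (\<mu> *\<^sub>R g x) \<bullet> u)"
        by (intro Bochner_Integration.integrable_add gauss.integrable_const gauss_int_inner)
      show "integrable std_gaussian h" by (rule int_h)
      fix u :: 'a
      show "f x + (\<mu> *\<^sub>R g x) \<bullet> u \<le> h u"
        using convex_tangent[OF cvx grad, of x "x + \<mu> *\<^sub>R u"] by (simp add: h_def)
    qed
    also have "(\<integral>u. f x + (\<mu> *\<^sub>R g x) \<bullet> u \<partial>std_gaussian) = f x"
      by (rule gauss_const_inner)
    finally show ?thesis by simp
  qed
  have up: "(\<integral>u. h (u - e) \<partial>std_gaussian) \<le> f xs + \<mu>\<^sup>2 * L1 * real DIM('a) / 2"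
  proof -
    have "(\<integral>u. h (u - e) \<partial>std_gaussian) \<le> (\<integral>u. f xs + (\<mu> *\<^sub>R g xs) \<bullet> u + (L1 / 2 * \<mu>\<^sup>2) * (norm u)\<^sup>2 \<partial>std_gaussian)"
    proof (rule integral_mono)
      show "integrable std_gaussian (\<lambda>u. h (u - e))"
      proof (rule gauss_int_lin[where A="\<bar>h 0\<bar> + L0 * \<mu> * norm e" and B="L0 * \<mu>"])
        fix u :: 'a
        have "\<bar>h (u - e)\<bar> \<le> \<bar>h 0\<bar> + (L0 * \<mu>) * norm (u - e)" by (rule hb)
        also have "\<dots> \<le> \<bar>h 0\<bar> + (L0 * \<mu>) * (norm u + norm e)"
          using L0 mu by (intro add_left_mono mult_left_mono norm_triangle_ineq4) auto
        finally show "\<bar>h (u - e)\<bar> \<le> \<bar>h 0\<bar> + L0 * \<mu> * norm e + L0 * \<mu> * norm u"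
          by (simp add: algebra_simps)
      qed (use L0 mu in auto)
      show "integrable std_gaussian (\<lambda>u. f xs + (\<mu> *\<^sub>R g xs) \<bullet> u + (L1 / 2 * \<mu>\<^sup>2) * (norm u)\<^sup>2)"
        by (intro Bochner_Integration.integrable_add gauss.integrable_const gauss_int_inner
            integrable_mult_right gauss_integrable_norm2)
      fix u :: 'a
      show "h (u - e) \<le> f xs + (\<mu> *\<^sub>R g xs) \<bullet> u + (L1 / 2 * \<mu>\<^sup>2) * (norm u)\<^sup>2"
        using descent_lemma[OF grad lip1, where x=xs and y="xs + \<mu> *\<^sub>R u"] mu
        by (simp add: he power_mult_distrib)
    qed
    also have "\<dots> = f xs + (L1 / 2 * \<mu>\<^sup>2) * real DIM('a)"
      by (rule gauss_quad)
    finally show ?thesis by (simp add: algebra_simps)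
  qed
  show "f x - f xs - \<mu>\<^sup>2 * L1 * real DIM('a) / 2
           \<le> (\<integral>u. f (x + \<mu> *\<^sub>R u) * (u \<bullet> (x - xs)) \<partial>std_gaussian) / \<mu>"
    using stein s1 low up by (simp add: h_def d_def)
qed



lemma main_abstract:
  fixes f :: "'a::euclidean_space \<Rightarrow> real"
    and g :: "'a \<Rightarrow> 'a"
    and N :: "real measure"
  assumes cvx: "convex_on UNIV f"
    and grad: "\<And>x. (f has_derivative (\<lambda>h. g x \<bullet> h)) (at x)"
    and lip0: "\<And>x y. \<bar>f x - f y\<bar> \<le> L0 * norm (x - y)"
    and lip1: "\<And>x y. norm (g x - g y) \<le> L1 * norm (x - y)"
    and N_prob: "prob_space N"
    and N_borel: "sets N = sets borel"
    and a_lt: "a < 1"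
    and supp: "AE \<nu> in N. \<nu> \<in> {-a..a}"
    and mean0: "(\<integral>\<nu>. \<nu> \<partial>N) = 0"
    and fxk: "f xk \<noteq> 0"
    and C4: "0 < C4"
  shows "f xk - f xstar - C4\<^sup>2 * L1 * real DIM('a) / 2 * \<bar>f xk\<bar> \<le>
     (\<integral>(u, \<nu>', \<nu>1, \<nu>0). ((f (xk + (C4 * sqrt \<bar>f xk * (1 + \<nu>')\<bar>) *\<^sub>R u) * (1 + \<nu>1) - f xk * (1 + \<nu>0))
            / (C4 * sqrt \<bar>f xk * (1 + \<nu>')\<bar>)) *\<^sub>R u \<bullet> (xk - xstar)
         \<partial>(std_gaussian \<Otimes>\<^sub>M (N \<Otimes>\<^sub>M (N \<Otimes>\<^sub>M N))))"
proof -
  interpret N: prob_space N by (rule N_prob)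
  note [measurable_cong] = N_borel
  have fm[measurable]: "f \<in> borel_measurable borel"
    by (rule borel_measurable_continuous_onI[OF f_continuous[OF grad]])
  interpret NN: pair_prob_space N N by unfold_locales
  interpret M: pair_prob_space N "N \<Otimes>\<^sub>M N" by unfold_locales
  interpret P: pair_prob_space "std_gaussian :: 'a measure" "N \<Otimes>\<^sub>M (N \<Otimes>\<^sub>M N)"
    by (intro pair_prob_space.intro pair_sigma_finite.intro prob_space_std_gaussian
        M.prob_space_axioms prob_space_imp_sigma_finite)
  define d where "d = xk - xstar"
  define \<phi> where "\<phi> \<nu> = C4 * sqrt \<bar>f xk * (1 + \<nu>)\<bar>" for \<nu>
  define S where "S = {-a..a}"
  define Q where "Q m = (fst m \<in> S \<and> fst (snd m) \<in> S \<and> snd (snd m) \<in> S)" for m :: "real \<times> real \<times> real"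
  define F where "F u m = (case m of (\<nu>', \<nu>1, \<nu>0) \<Rightarrow>
      ((f (xk + \<phi> \<nu>' *\<^sub>R u) * (1 + \<nu>1) - f xk * (1 + \<nu>0)) / \<phi> \<nu>') *\<^sub>R u \<bullet> d)" for u m
  define K0 where "K0 = f xk - f xstar"
  define K1 where "K1 = C4\<^sup>2 * L1 * real DIM('a) / 2 * \<bar>f xk\<bar>"
  have Fm[measurable]: "case_prod F \<in> borel_measurable (std_gaussian \<Otimes>\<^sub>M (N \<Otimes>\<^sub>M (N \<Otimes>\<^sub>M N)))"
    unfolding F_def \<phi>_def by measurable
  have feq: "(\<lambda>(u, \<nu>', \<nu>1, \<nu>0). ((f (xk + (C4 * sqrt \<bar>f xk * (1 + \<nu>')\<bar>) *\<^sub>R u) * (1 + \<nu>1) - f xk * (1 + \<nu>0))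
            / (C4 * sqrt \<bar>f xk * (1 + \<nu>')\<bar>)) *\<^sub>R u \<bullet> (xk - xstar)) = case_prod F"
    by (auto simp: F_def \<phi>_def d_def fun_eq_iff)
  have SN[measurable]: "S \<in> sets borel" unfolding S_def by simp
  have aS: "AE y in N. y \<in> S" using supp by (simp add: S_def)
  have AEq: "AE q in N \<Otimes>\<^sub>M N. fst q \<in> S \<and> snd q \<in> S"
  proof (rule NN.AE_pair_measure)
    show "{x \<in> space (N \<Otimes>\<^sub>M N). fst x \<in> S \<and> snd x \<in> S} \<in> sets (N \<Otimes>\<^sub>M N)" by measurable
    show "AE x in N. AE y in N. fst (x, y) \<in> S \<and> snd (x, y) \<in> S"
    proof (rule eventually_mono[OF aS])
      fix x assume "x \<in> S"
      then show "AE y in N. fst (x, y) \<in> S \<and> snd (x, y) \<in> S" using aS by (auto elim: eventually_mono)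
    qed
  qed
  have Q1: "AE m in N \<Otimes>\<^sub>M (N \<Otimes>\<^sub>M N). Q m"
  proof (rule M.AE_pair_measure)
    show "{x \<in> space (N \<Otimes>\<^sub>M (N \<Otimes>\<^sub>M N)). Q x} \<in> sets (N \<Otimes>\<^sub>M (N \<Otimes>\<^sub>M N))"
      unfolding Q_def by measurable
    show "AE x in N. AE y in N \<Otimes>\<^sub>M N. Q (x, y)"
    proof (rule eventually_mono[OF aS])
      fix x assume "x \<in> S"
      then show "AE y in N \<Otimes>\<^sub>M N. Q (x, y)" using AEq by (auto elim: eventually_mono simp: Q_def)
    qed
  qed
  have Q2: "AE p in (std_gaussian :: 'a measure) \<Otimes>\<^sub>M (N \<Otimes>\<^sub>M (N \<Otimes>\<^sub>M N)). Q (snd p)"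
  proof (rule P.AE_pair_measure[where P="\<lambda>p. Q (snd p)"])
    show "{x \<in> space ((std_gaussian :: 'a measure) \<Otimes>\<^sub>M (N \<Otimes>\<^sub>M (N \<Otimes>\<^sub>M N))). Q (snd x)} \<in> sets ((std_gaussian :: 'a measure) \<Otimes>\<^sub>M (N \<Otimes>\<^sub>M (N \<Otimes>\<^sub>M N)))"
      unfolding Q_def by measurable
    show "AE x in (std_gaussian :: 'a measure). AE y in N \<Otimes>\<^sub>M (N \<Otimes>\<^sub>M N). Q (snd (x, y))"
      using Q1 by simp
  qed
  have Mprob: "prob_space (N \<Otimes>\<^sub>M (N \<Otimes>\<^sub>M N))"
    by (intro prob_space_pair N_prob)
  obtain bb :: 'a where bb: "bb \<in> Basis" using SOME_Basis by blast
  have L0: "0 \<le> L0"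
  proof -
    have "\<bar>f bb - f 0\<bar> \<le> L0 * norm (bb - 0)" by (rule lip0)
    then have "\<bar>f bb - f 0\<bar> \<le> L0" using bb by simp
    then show ?thesis by (meson abs_ge_zero order.trans)
  qed
  define \<mu>min where "\<mu>min = C4 * sqrt (\<bar>f xk\<bar> * (1 - a))"
  have \<mu>min: "0 < \<mu>min" using C4 fxk a_lt by (simp add: \<mu>min_def)
  have phi_ge: "\<mu>min \<le> \<phi> \<nu>" "0 < \<phi> \<nu>" "(\<phi> \<nu>)\<^sup>2 = C4\<^sup>2 * \<bar>f xk\<bar> * (1 + \<nu>)" if "\<nu> \<in> S" for \<nu>
  proof -
    have n: "1 - a \<le> 1 + \<nu>" "0 < 1 + \<nu>" using that a_lt by (auto simp: S_def)
    have e: "\<bar>f xk * (1 + \<nu>)\<bar> = \<bar>f xk\<bar> * (1 + \<nu>)" using n by (simp add: abs_mult)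
    have "sqrt (\<bar>f xk\<bar> * (1 - a)) \<le> sqrt (\<bar>f xk\<bar> * (1 + \<nu>))"
      using n by (intro real_sqrt_le_mono mult_left_mono) auto
    then show "\<mu>min \<le> \<phi> \<nu>" using C4 by (simp add: \<mu>min_def \<phi>_def e)
    then show "0 < \<phi> \<nu>" using \<mu>min by linarith
    show "(\<phi> \<nu>)\<^sup>2 = C4\<^sup>2 * \<bar>f xk\<bar> * (1 + \<nu>)"
      using n by (simp add: \<phi>_def e power_mult_distrib)
  qed
  define a1 where "a1 = 2 * \<bar>a\<bar> * \<bar>f xk\<bar> / \<mu>min"
  define b1 where "b1 = (1 + \<bar>a\<bar>) * L0"
  define G where "G u = ((a1 + b1) * (0 + norm d)) * (1 + (norm u)\<^sup>2)" for u :: 'a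
  have Fbound: "\<bar>F u m\<bar> \<le> G u" if "Q m" for u m
  proof -
    obtain \<nu>' \<nu>1 \<nu>0 where m: "m = (\<nu>', \<nu>1, \<nu>0)" by (cases m) auto
    have inS: "\<nu>' \<in> S" "\<nu>1 \<in> S" "\<nu>0 \<in> S" using that by (auto simp: Q_def m)
    define \<mu> where "\<mu> = \<phi> \<nu>'"
    have \<mu>: "\<mu>min \<le> \<mu>" "0 < \<mu>" using phi_ge[OF inS(1)] by (auto simp: \<mu>_def)
    define A where "A = (f (xk + \<mu> *\<^sub>R u) * (1 + \<nu>1) - f xk * (1 + \<nu>0)) / \<mu>"
    have FA: "F u m = A * (u \<bullet> d)" by (simp add: F_def m A_def \<mu>_def)
    have num: "f (xk + \<mu> *\<^sub>R u) * (1 + \<nu>1) - f xk * (1 + \<nu>0)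
        = (1 + \<nu>1) * (f (xk + \<mu> *\<^sub>R u) - f xk) + f xk * (\<nu>1 - \<nu>0)"
      by (simp add: algebra_simps)
    have t1: "\<bar>1 + \<nu>1\<bar> \<le> 1 + \<bar>a\<bar>" "\<bar>\<nu>1 - \<nu>0\<bar> \<le> 2 * \<bar>a\<bar>"
      using inS by (auto simp: S_def)
    have t2: "\<bar>f (xk + \<mu> *\<^sub>R u) - f xk\<bar> \<le> L0 * (\<mu> * norm u)"
      using lip0[of "xk + \<mu> *\<^sub>R u" xk] \<mu> by simp
    have "\<bar>(1 + \<nu>1) * (f (xk + \<mu> *\<^sub>R u) - f xk)\<bar> \<le> (1 + \<bar>a\<bar>) * (L0 * (\<mu> * norm u))"
      unfolding abs_mult using t1 t2 by (intro mult_mono) auto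
    moreover have "\<bar>f xk * (\<nu>1 - \<nu>0)\<bar> \<le> \<bar>f xk\<bar> * (2 * \<bar>a\<bar>)"
      unfolding abs_mult using t1 by (intro mult_left_mono) auto
    ultimately have "\<bar>f (xk + \<mu> *\<^sub>R u) * (1 + \<nu>1) - f xk * (1 + \<nu>0)\<bar> \<le> (1 + \<bar>a\<bar>) * (L0 * (\<mu> * norm u)) + \<bar>f xk\<bar> * (2 * \<bar>a\<bar>)"
      unfolding num by (rule order.trans[OF abs_triangle_ineq add_mono])
    then have "\<bar>A\<bar> \<le> ((1 + \<bar>a\<bar>) * (L0 * (\<mu> * norm u)) + \<bar>f xk\<bar> * (2 * \<bar>a\<bar>)) / \<mu>"
      unfolding A_def using \<mu> by (simp add: abs_div divide_right_mono)
    also have "\<dots> = b1 * norm u + (2 * \<bar>a\<bar> * \<bar>f xk\<bar>) / \<mu>"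
      using \<mu> by (simp add: b1_def field_simps)
    also have "(2 * \<bar>a\<bar> * \<bar>f xk\<bar>) / \<mu> \<le> a1"
      unfolding a1_def using \<mu> \<mu>min by (intro divide_left_mono) auto
    finally have Ab: "\<bar>A\<bar> \<le> a1 + b1 * norm u" by simp
    have db: "\<bar>u \<bullet> d\<bar> \<le> 0 + norm d * norm u"
      using Cauchy_Schwarz_ineq2[of u d] by (simp add: mult.commute)
    have "\<bar>A * (u \<bullet> d)\<bar> \<le> ((a1 + b1) * (0 + norm d)) * (1 + (norm u)\<^sup>2)"
      by (rule lin_lin_poly_bound[OF Ab db]) (use \<mu>min L0 in \<open>auto simp: a1_def b1_def\<close>)
    then show ?thesis by (simp add: FA G_def)
  qed
  have Gm[measurable]: "G \<in> borel_measurable borel" unfolding G_def by measurable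
  have IG: "integrable (std_gaussian \<Otimes>\<^sub>M (N \<Otimes>\<^sub>M (N \<Otimes>\<^sub>M N))) (\<lambda>p. G (fst p))"
  proof (rule P.Fubini_integrable)
    show "(\<lambda>p. G (fst p)) \<in> borel_measurable (std_gaussian \<Otimes>\<^sub>M (N \<Otimes>\<^sub>M (N \<Otimes>\<^sub>M N)))" by measurable
    have "integrable std_gaussian (\<lambda>u. \<bar>G u\<bar>)"
      by (rule gauss_integrable_poly[where C="\<bar>(a1 + b1) * (0 + norm d)\<bar>"]) (auto simp: G_def abs_mult)
    moreover have "(\<integral>y. norm (G (fst (x, y))) \<partial>(N \<Otimes>\<^sub>M (N \<Otimes>\<^sub>M N))) = \<bar>G x\<bar>" for x
      using prob_space.prob_space[OF Mprob] by simp
    ultimately show "integrable std_gaussian (\<lambda>x. \<integral>y. norm (G (fst (x, y))) \<partial>(N \<Otimes>\<^sub>M (N \<Otimes>\<^sub>M N)))"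
      by simp
    show "AE x in std_gaussian. integrable (N \<Otimes>\<^sub>M (N \<Otimes>\<^sub>M N)) (\<lambda>y. G (fst (x, y)))"
      using finite_measure.integrable_const[OF prob_space.finite_measure[OF Mprob]] by simp
  qed
  have I1: "integrable (std_gaussian \<Otimes>\<^sub>M (N \<Otimes>\<^sub>M (N \<Otimes>\<^sub>M N))) (case_prod F)"
  proof (rule Bochner_Integration.integrable_bound[OF IG Fm])
    show "AE p in std_gaussian \<Otimes>\<^sub>M (N \<Otimes>\<^sub>M (N \<Otimes>\<^sub>M N)). norm (case_prod F p) \<le> norm (G (fst p))"
      using Q2 by (rule eventually_mono) (auto intro: order.trans[OF Fbound abs_ge_self])
  qed
  have I2: "(1 + fst (snd m)) * (K0 - K1 * (1 + fst m)) \<le> (\<integral>u. F u m \<partial>std_gaussian)" if "Q m" for m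
  proof -
    obtain \<nu>' \<nu>1 \<nu>0 where m: "m = (\<nu>', \<nu>1, \<nu>0)" by (cases m) auto
    have inS: "\<nu>' \<in> S" "\<nu>1 \<in> S" "\<nu>0 \<in> S" using that by (auto simp: Q_def m)
    define \<mu> where "\<mu> = \<phi> \<nu>'"
    have \<mu>: "0 < \<mu>" "\<mu>\<^sup>2 = C4\<^sup>2 * \<bar>f xk\<bar> * (1 + \<nu>')" using phi_ge[OF inS(1)] by (auto simp: \<mu>_def)
    have nu1: "0 \<le> 1 + \<nu>1" using inS(2) a_lt by (auto simp: S_def)
    define I where "I = (\<integral>u. f (xk + \<mu> *\<^sub>R u) * (u \<bullet> (xk - xstar)) \<partial>std_gaussian)"
    have main: "f xk - f xstar - \<mu>\<^sup>2 * L1 * real DIM('a) / 2 \<le> I / \<mu>"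
      unfolding I_def by (rule gauss_main(1)[OF cvx grad lip0 lip1 \<mu>(1)])
    have int1: "integrable std_gaussian (\<lambda>u. f (xk + \<mu> *\<^sub>R u) * (u \<bullet> d))"
      unfolding d_def by (rule gauss_main(2)[OF cvx grad lip0 lip1 \<mu>(1)])
    have FA: "F u m = ((1 + \<nu>1) / \<mu>) * (f (xk + \<mu> *\<^sub>R u) * (u \<bullet> d)) - ((1 + \<nu>0) * f xk / \<mu>) * (d \<bullet> u)" for u
      by (simp add: F_def m \<mu>_def inner_commute[of d u] diff_divide_distrib algebra_simps)
    have "(\<integral>u. F u m \<partial>std_gaussian) = ((1 + \<nu>1) / \<mu>) * (\<integral>u. f (xk + \<mu> *\<^sub>R u) * (u \<bullet> d) \<partial>std_gaussian)
        - ((1 + \<nu>0) * f xk / \<mu>) * (\<integral>u. d \<bullet> u \<partial>std_gaussian)"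
      unfolding FA using int1 gauss_int_inner[of d]
      by (subst Bochner_Integration.integral_diff) (auto intro!: integrable_mult_right)
    also have "\<dots> = (1 + \<nu>1) * (I / \<mu>)"
      by (simp add: gauss_inner_zero I_def d_def)
    finally have e: "(\<integral>u. F u m \<partial>std_gaussian) = (1 + \<nu>1) * (I / \<mu>)" .
    have "K1 * (1 + \<nu>') = \<mu>\<^sup>2 * L1 * real DIM('a) / 2"
      unfolding K1_def \<mu>(2) by (simp add: algebra_simps)
    then have "(1 + \<nu>1) * (K0 - K1 * (1 + \<nu>')) \<le> (1 + \<nu>1) * (I / \<mu>)"
      using main nu1 by (intro mult_left_mono) (auto simp: K0_def)
    then show ?thesis using e by (simp add: m)
  qed
  have I4: "integrable (N \<Otimes>\<^sub>M (N \<Otimes>\<^sub>M N)) (\<lambda>m. (1 + fst (snd m)) * (K0 - K1 * (1 + fst m)))"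
  proof (rule finite_measure.integrable_const_bound[OF prob_space.finite_measure[OF Mprob], where B="(1 + \<bar>a\<bar>) * (\<bar>K0\<bar> + \<bar>K1\<bar> * (1 + \<bar>a\<bar>))"])
    show "AE m in N \<Otimes>\<^sub>M (N \<Otimes>\<^sub>M N). norm ((1 + fst (snd m)) * (K0 - K1 * (1 + fst m))) \<le> (1 + \<bar>a\<bar>) * (\<bar>K0\<bar> + \<bar>K1\<bar> * (1 + \<bar>a\<bar>))"
    proof (rule eventually_mono[OF Q1])
      fix m :: "real \<times> real \<times> real" assume "Q m"
      then have b: "\<bar>1 + fst (snd m)\<bar> \<le> 1 + \<bar>a\<bar>" "\<bar>1 + fst m\<bar> \<le> 1 + \<bar>a\<bar>" by (auto simp: Q_def S_def)
      have "\<bar>K0 - K1 * (1 + fst m)\<bar> \<le> \<bar>K0\<bar> + \<bar>K1\<bar> * \<bar>1 + fst m\<bar>"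
        by (metis abs_mult abs_triangle_ineq4)
      also have "\<dots> \<le> \<bar>K0\<bar> + \<bar>K1\<bar> * (1 + \<bar>a\<bar>)" using b by (intro add_left_mono mult_left_mono) auto
      finally show "norm ((1 + fst (snd m)) * (K0 - K1 * (1 + fst m))) \<le> (1 + \<bar>a\<bar>) * (\<bar>K0\<bar> + \<bar>K1\<bar> * (1 + \<bar>a\<bar>))"
        unfolding real_norm_def abs_mult using b by (intro mult_mono) auto
    qed
  qed measurable
  have intN: "integrable N (\<lambda>x. x)"
  proof (rule N.integrable_const_bound[where B="\<bar>a\<bar>"])
    show "AE x in N. norm x \<le> \<bar>a\<bar>" using supp by (rule eventually_mono) auto
  qed measurable
  have E1: "(\<integral>x. c + k * x \<partial>N) = c" for c k
    using intN mean0 N.prob_space by (subst Bochner_Integration.integral_add) auto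
  have IQ: "integrable (N \<Otimes>\<^sub>M N) (\<lambda>y. 1 + fst y)"
  proof (rule finite_measure.integrable_const_bound[OF prob_space.finite_measure[OF prob_space_pair[OF N_prob N_prob]], where B="1 + \<bar>a\<bar>"])
    show "AE y in N \<Otimes>\<^sub>M N. norm (1 + fst y) \<le> 1 + \<bar>a\<bar>" using AEq by (rule eventually_mono) (auto simp: S_def)
  qed measurable
  have E2: "(\<integral>y. 1 + fst y \<partial>(N \<Otimes>\<^sub>M N)) = 1"
  proof -
    have "(\<integral>y. 1 + fst y \<partial>(N \<Otimes>\<^sub>M N)) = integral\<^sup>L (N \<Otimes>\<^sub>M N) (\<lambda>(x, y). 1 + x)"
      by (simp add: split_beta')
    also have "\<dots> = (\<integral>x. (\<integral>y. 1 + x \<partial>N) \<partial>N)"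
      using IQ by (intro NN.integral_fst[symmetric]) (simp add: split_beta')
    also have "\<dots> = (\<integral>x. 1 + 1 * x \<partial>N)" using N.prob_space by simp
    also have "\<dots> = 1" by (rule E1)
    finally show ?thesis .
  qed
  have I3: "(\<integral>m. (1 + fst (snd m)) * (K0 - K1 * (1 + fst m)) \<partial>(N \<Otimes>\<^sub>M (N \<Otimes>\<^sub>M N))) = K0 - K1"
  proof -
    have "(\<integral>m. (1 + fst (snd m)) * (K0 - K1 * (1 + fst m)) \<partial>(N \<Otimes>\<^sub>M (N \<Otimes>\<^sub>M N)))
        = integral\<^sup>L (N \<Otimes>\<^sub>M (N \<Otimes>\<^sub>M N)) (\<lambda>(x, y). (1 + fst y) * (K0 - K1 * (1 + x)))"
      by (simp add: split_beta')
    also have "\<dots> = (\<integral>x. (\<integral>y. (1 + fst y) * (K0 - K1 * (1 + x)) \<partial>(N \<Otimes>\<^sub>M N)) \<partial>N)"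
      using I4 by (intro M.integral_fst[symmetric]) (simp add: split_beta')
    also have "\<dots> = (\<integral>x. (K0 - K1) + (- K1) * x \<partial>N)"
    proof -
      have inner: "(\<integral>y. (1 + fst y) * (K0 - K1 * (1 + x)) \<partial>(N \<Otimes>\<^sub>M N)) = (K0 - K1) + (- K1) * x" for x
        by (subst integral_mult_left_zero) (simp add: E2 algebra_simps)
      show ?thesis unfolding inner ..
    qed
    also have "\<dots> = K0 - K1" by (rule E1)
    finally show ?thesis .
  qed
  have "K0 - K1 = (\<integral>m. (1 + fst (snd m)) * (K0 - K1 * (1 + fst m)) \<partial>(N \<Otimes>\<^sub>M (N \<Otimes>\<^sub>M N)))"
    by (rule I3[symmetric])
  also have "\<dots> \<le> (\<integral>m. (\<integral>u. F u m \<partial>std_gaussian) \<partial>(N \<Otimes>\<^sub>M (N \<Otimes>\<^sub>M N)))"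
    by (rule integral_mono_AE[OF I4 P.integrable_snd[OF I1]]) (use Q1 I2 in \<open>auto elim: AE_mp\<close>)
  also have "\<dots> = integral\<^sup>L (std_gaussian \<Otimes>\<^sub>M (N \<Otimes>\<^sub>M (N \<Otimes>\<^sub>M N))) (case_prod F)"
    by (rule P.integral_snd[OF I1])
  finally show ?thesis unfolding feq by (simp add: K0_def K1_def)
qed

theorem lemma5:
  fixes f :: "'a::euclidean_space \<Rightarrow> real"
    and g :: "'a \<Rightarrow> 'a"
    and L0 L1 :: real
    and xstar xk :: 'a
    and N :: "real measure"
    and \<sigma>r a b :: real
  assumes convex: "convex_on UNIV f"
    and grad: "\<And>x. (f has_derivative (\<lambda>h. g x \<bullet> h)) (at x)"
    and grad_cont: "continuous_on UNIV g"
    and lip0: "\<And>x y. \<bar>f x - f y\<bar> \<le> L0 * norm (x - y)"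
    and lip1: "\<And>x y. norm (g x - g y) \<le> L1 * norm (x - y)"
    and L1_pos: "L1 > 0"
    and minimizer: "\<And>y. f xstar \<le> f y"
    and N_prob: "prob_space N"
    and N_borel: "sets N = sets borel"
    and a_lt: "a < 1"
    and supp: "AE \<nu> in N. \<nu> \<in> {-a..a}"
    and mean0: "(\<integral>\<nu>. \<nu> \<partial>N) = 0"
    and var: "(\<integral>\<nu>. \<nu>\<^sup>2 \<partial>N) = \<sigma>r\<^sup>2"
    and var_pos: "\<sigma>r\<^sup>2 > 0"
    and inv_bound: "(\<integral>\<nu>. 1 / (1 + \<nu>) \<partial>N) \<le> b"
    and fxk: "f xk \<noteq> 0"
  shows
    "let n = real DIM('a);
         C4 = (16 * \<sigma>r\<^sup>2 * n / (L1\<^sup>2 * (1 + 3 * \<sigma>r\<^sup>2) * (n + 6) ^ 3)) powr (1/4)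
     in (\<integral>(u, \<nu>', \<nu>1, \<nu>0).
           (let \<mu> = C4 * sqrt \<bar>f xk * (1 + \<nu>')\<bar>;
                s = ((f (xk + \<mu> *\<^sub>R u) * (1 + \<nu>1) - f xk * (1 + \<nu>0)) / \<mu>) *\<^sub>R u
            in s \<bullet> (xk - xstar))
         \<partial>(std_gaussian \<Otimes>\<^sub>M (N \<Otimes>\<^sub>M (N \<Otimes>\<^sub>M N))))
        \<ge> f xk - f xstar - C4\<^sup>2 * L1 * n / 2 * \<bar>f xk\<bar>"
  proof -
  have C4pos: "0 < (16 * \<sigma>r\<^sup>2 * real DIM('a) / (L1\<^sup>2 * (1 + 3 * \<sigma>r\<^sup>2) * (real DIM('a) + 6) ^ 3)) powr (1/4)"
  proof -
    have "0 < 1 + 3 * \<sigma>r\<^sup>2" by (simp add: add_pos_nonneg)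
    then have h: "1 + 3 * \<sigma>r\<^sup>2 \<noteq> 0" by linarith
    show ?thesis using var_pos L1_pos h by (simp add: powr_gt_zero)
  qed
  show ?thesis
    unfolding Let_def
    using main_abstract[OF convex grad lip0 lip1 N_prob N_borel a_lt supp mean0 fxk C4pos, of xstar]
    by simp
qed

end
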